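(* Let $\mathcal{X}=\langle P,K,V\rangle$ be a polyhedral model. The logical equivalence relation $\equiv$ on $P$ has only finitely many equivalence classes, and for each equivalence class $C$ there is an SLCS formula $\phi^C$ such that for all $x\in P$: $\mathcal{X},x\models\phi^C\iff x\in C$.
   Context: A $d$-simplex $\sigma\subseteq\mathbb{R}^m$ is the convex hull of $d+1$ affinely independent points $v_0,\dots,v_d$ (its vertices); the simplexes spanned by subsets of the vertices (including the empty simplex) are its faces, and $\tau\preceq\sigma$ means $\tau$ is a face of $\sigma$. The relative interior of $\sigma$ is $\tilde\sigma=\{\sum_i\lambda_iv_i:\lambda_i\in(0,1],\sum_i\lambda_i=1\}$. A simplicial complex $K$ is a finite set of simplexes of $\mathbb{R}^m$ closed under taking faces and such that the intersection of any two of its simplexes is a face of both. Its polyhedron is $|K|=\bigcup K$, with the subspace topology of $\mathbb{R}^m$; $\mathcal{C}$ and $\mathcal{I}$ denote closure and interior in this space. The cells of $K$ are the sets $\tilde\sigma$ for nonempty $\sigma\in K$; they form a partition $\tilde K$ of $|K|$. A path in a space $P$ is a continuous $\pi:[0,1]\to P$; $\pi(S)=\{\pi(s):s\in S\}$. Fix a finite set $AP$ of atomic propositions. A polyhedral model is $\mathcal{X}=\langle P,K,V\rangle$ with $K$ a simplicial complex, $P=|K|$, and $V:AP\to\mathcal{P}(P)$ such that each $V(p)$ is a union of cells of $K$ ($K$ is then called coherent with the model). SLCS formulas: $\phi::=\top\mid p\mid\neg\phi\mid\phi\wedge\phi\mid\Box\phi\mid\gamma(\phi,\phi)$, $p\in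 AP$. Semantics at $x\in P$, with $[\![\phi]\!]=\{x\in P:\mathcal{X},x\models\phi\}$: $\top$ always holds; $x\models p$ iff $x\in V(p)$; Boolean connectives as usual; $x\models\Box\phi$ iff $x\in\mathcal{I}([\![\phi]\!])$; $x\models\gamma(\phi,\psi)$ iff there is a path $\pi$ in $P$ with $\pi(0)=x$, $\pi((0,1))\subseteq[\![\phi]\!]$ and $\pi(1)\in[\![\psi]\!]$. Logical equivalence $\equiv$ on $P$: $x\equiv y$ iff $x$ and $y$ satisfy exactly the same SLCS formulas. *)

theory Defs
  imports "HOL-Analysis.Analysis"
begin

text \<open>Simplexes in an arbitrary Euclidean space 'a (playing the role of R^m).
  A simplex is the convex hull of a finite affinely independent vertex set
  (the empty vertex set gives the empty simplex).\<close>

definition is_simplex :: "'a::euclidean_space set \<Rightarrow> bool" where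
  "is_simplex \<sigma> \<longleftrightarrow> (\<exists>V. finite V \<and> \<not> affine_dependent V \<and> \<sigma> = convex hull V)"

definition simplex_face :: "'a::euclidean_space set \<Rightarrow> 'a set \<Rightarrow> bool" where
  "simplex_face \<tau> \<sigma> \<longleftrightarrow> (\<exists>V W. finite V \<and> \<not> affine_dependent V \<and> \<sigma> = convex hull V
        \<and> W \<subseteq> V \<and> \<tau> = convex hull W)"

definition open_simplex :: "'a::euclidean_space set \<Rightarrow> 'a set" where
  "open_simplex V = {x. \<exists>l. (\<forall>v\<in>V. 0 < l v \<and> l v \<le> 1) \<and> sum l V = 1
                          \<and> x = (\<Sum>v\<in>V. l v *\<^sub>R v)}"

definition simplicial_complex :: "'a::euclidean_space set set \<Rightarrow> bool" where
  "simplicial_complex K \<longleftrightarrow> finite K \<and> (\<forall>\<sigma>\<in>K. is_simplex \<sigma>)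
     \<and> (\<forall>\<sigma>\<in>K. \<forall>\<tau>. simplex_face \<tau> \<sigma> \<longrightarrow> \<tau> \<in> K)
     \<and> (\<forall>\<sigma>\<in>K. \<forall>\<tau>\<in>K. simplex_face (\<sigma> \<inter> \<tau>) \<sigma> \<and> simplex_face (\<sigma> \<inter> \<tau>) \<tau>)"

definition cells :: "'a::euclidean_space set set \<Rightarrow> 'a set set" where
  "cells K = {C. \<exists>V. finite V \<and> \<not> affine_dependent V \<and> V \<noteq> {}
                   \<and> convex hull V \<in> K \<and> C = open_simplex V}"

text \<open>Polyhedral model: K simplicial complex, P = |K|, each V(p) a union of cells.\<close>
definition polyhedral_model :: "'a::euclidean_space set set \<Rightarrow> ('p \<Rightarrow> 'a set) \<Rightarrow> bool" where
  "polyhedral_model K Val \<longleftrightarrow> simplicial_complex K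
     \<and> (\<forall>p. \<exists>S. S \<subseteq> cells K \<and> Val p = \<Union>S)"

datatype 'p slcs = Top | Atom 'p | Neg "'p slcs" | Conj "'p slcs" "'p slcs"
  | Box "'p slcs" | Gamma "'p slcs" "'p slcs"

fun sem :: "'a::euclidean_space set set \<Rightarrow> ('p \<Rightarrow> 'a set) \<Rightarrow> 'p slcs \<Rightarrow> 'a set" where
  "sem K Val Top = \<Union>K"
| "sem K Val (Atom p) = \<Union>K \<inter> Val p"
| "sem K Val (Neg \<phi>) = \<Union>K - sem K Val \<phi>"
| "sem K Val (Conj \<phi> \<psi>) = sem K Val \<phi> \<inter> sem K Val \<psi>"
| "sem K Val (Box \<phi>) = (top_of_set (\<Union>K)) interior_of (sem K Val \<phi>)"
| "sem K Val (Gamma \<phi> \<psi>) = {x \<in> \<Union>K. \<exists>\<pi>. path \<pi> \<and> path_image \<pi> \<subseteq> \<Union>K \<and> \<pi> 0 = x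
        \<and> (\<forall>s\<in>{0<..<1}. \<pi> s \<in> sem K Val \<phi>) \<and> \<pi> 1 \<in> sem K Val \<psi>}"

definition sat :: "'a::euclidean_space set set \<Rightarrow> ('p \<Rightarrow> 'a set) \<Rightarrow> 'a \<Rightarrow> 'p slcs \<Rightarrow> bool" where
  "sat K Val x \<phi> \<longleftrightarrow> x \<in> sem K Val \<phi>"

definition log_equiv :: "'a::euclidean_space set set \<Rightarrow> ('p \<Rightarrow> 'a set) \<Rightarrow> ('a \<times> 'a) set" where
  "log_equiv K Val = {(x, y). x \<in> \<Union>K \<and> y \<in> \<Union>K \<and> (\<forall>\<phi>. sat K Val x \<phi> \<longleftrightarrow> sat K Val y \<phi>)}"

end

theory Submission
  imports Defs
begin


lemma coord_unique:
  fixes U :: "'a::euclidean_space set"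
  assumes "finite U" "\<not> affine_dependent U" "sum a U = 1" "sum b U = 1"
    "(\<Sum>u\<in>U. a u *\<^sub>R u) = (\<Sum>u\<in>U. b u *\<^sub>R u)" "u \<in> U"
  shows "a u = b u"
proof (rule ccontr)
  assume ne: "a u \<noteq> b u"
  have "sum (\<lambda>v. a v - b v) U = 0" using assms by (simp add: sum_subtractf)
  moreover have "(\<Sum>v\<in>U. (a v - b v) *\<^sub>R v) = 0"
    using assms(5) by (simp add: scaleR_diff_left sum_subtractf)
  ultimately have "affine_dependent U"
    apply (subst affine_dependent_explicit_finite[OF assms(1)])
    apply (rule exI[of _ "\<lambda>v. a v - b v"])
    using ne assms(6) by auto
  with assms(2) show False by simp
qed

lemma vertex_unique:
  fixes V W :: "'a::euclidean_space set"
  assumes "\<not> affine_dependent V" "\<not> affine_dependent W" "convex hull V = convex hull W"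
  shows "V = W"
proof (rule set_eqI)
  fix x
  have "x \<in> V \<longleftrightarrow> x extreme_point_of (convex hull V)"
    by (rule extreme_point_of_convex_hull_affine_independent[OF assms(1), symmetric])
  also have "\<dots> \<longleftrightarrow> x extreme_point_of (convex hull W)" by (simp add: assms(3))
  also have "\<dots> \<longleftrightarrow> x \<in> W" by (rule extreme_point_of_convex_hull_affine_independent[OF assms(2)])
  finally show "x \<in> V \<longleftrightarrow> x \<in> W" .
qed

lemma common_face:
  fixes U1 :: "'a::euclidean_space set"
  assumes K: "simplicial_complex K" and "convex hull U1 \<in> K" "convex hull U2 \<in> K"
    "\<not> affine_dependent U1" "\<not> affine_dependent U2"
  shows "\<exists>W. W \<subseteq> U1 \<and> W \<subseteq> U2 \<and> convex hull U1 \<inter> convex hull U2 = convex hull W"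
proof -
  have f1: "simplex_face (convex hull U1 \<inter> convex hull U2) (convex hull U1)"
   and f2: "simplex_face (convex hull U1 \<inter> convex hull U2) (convex hull U2)"
    using K assms(2,3) unfolding simplicial_complex_def by blast+
  obtain V W where V: "finite V" "\<not> affine_dependent V" "convex hull U1 = convex hull V"
    "W \<subseteq> V" "convex hull U1 \<inter> convex hull U2 = convex hull W"
    using f1 unfolding simplex_face_def by blast
  obtain V2 W2 where V2: "finite V2" "\<not> affine_dependent V2" "convex hull U2 = convex hull V2"
    "W2 \<subseteq> V2" "convex hull U1 \<inter> convex hull U2 = convex hull W2"
    using f2 unfolding simplex_face_def by blast
  have "V = U1" using vertex_unique V assms(4) by metis
  have "V2 = U2" using vertex_unique V2 assms(5) by metis
  have "W = W2"
    using vertex_unique[of W W2] V V2 affine_independent_subset by metis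
  thus ?thesis using V V2 \<open>V = U1\<close> \<open>V2 = U2\<close> by blast
qed

definition rep :: "'a::euclidean_space set \<Rightarrow> ('a \<Rightarrow> real) \<Rightarrow> 'a \<Rightarrow> bool" where
  "rep U a z \<longleftrightarrow> (\<forall>u\<in>U. 0 \<le> a u) \<and> sum a U = 1 \<and> z = (\<Sum>u\<in>U. a u *\<^sub>R u)"

lemma rep_in_hull: "finite U \<Longrightarrow> rep U a z \<Longrightarrow> z \<in> convex hull U"
  unfolding rep_def by (auto simp: convex_hull_finite)

lemma hull_rep: "finite U \<Longrightarrow> z \<in> convex hull U \<Longrightarrow> \<exists>a. rep U a z"
  unfolding rep_def by (auto simp: convex_hull_finite)

lemma support_lemma:
  fixes U :: "'a::euclidean_space set"
  assumes "finite U" "\<not> affine_dependent U" "W \<subseteq> U" "rep U a z" "z \<in> convex hull W" "u \<in> U - W"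
  shows "a u = 0"
proof -
  have fW: "finite W" using assms finite_subset by blast
  obtain b where b: "rep W b z" using hull_rep[OF fW assms(5)] by blast
  define b' where "b' = (\<lambda>u. if u \<in> W then b u else 0)"
  have "sum b' U = sum b' W"
    by (rule sum.mono_neutral_right[OF assms(1) assms(3)]) (auto simp: b'_def)
  also have "\<dots> = sum b W" by (rule sum.cong) (auto simp: b'_def)
  finally have sb: "sum b' U = sum b W" .
  have "(\<Sum>u\<in>U. b' u *\<^sub>R u) = (\<Sum>u\<in>W. b' u *\<^sub>R u)"
    by (rule sum.mono_neutral_right[OF assms(1) assms(3)]) (auto simp: b'_def)
  also have "\<dots> = (\<Sum>u\<in>W. b u *\<^sub>R u)" by (rule sum.cong) (auto simp: b'_def)
  finally have sv: "(\<Sum>u\<in>U. b' u *\<^sub>R u) = (\<Sum>u\<in>W. b u *\<^sub>R u)" .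
  have "a u = b' u"
    apply (rule coord_unique[OF assms(1,2)])
    using assms(4,6) b sb sv
    by (auto simp: rep_def)
  thus ?thesis using assms(6) by (simp add: b'_def)
qed



definition hv :: "('a \<Rightarrow> real) \<Rightarrow> 'a::euclidean_space set \<Rightarrow> ('a \<Rightarrow> real) \<Rightarrow> 'a" where
  "hv c U a = inverse (\<Sum>u\<in>U. c u * a u) *\<^sub>R (\<Sum>u\<in>U. (c u * a u) *\<^sub>R u)"

lemma hv_restrict:
  assumes "finite U" "W \<subseteq> U" "\<forall>u\<in>U - W. a u = 0"
  shows "hv c U a = hv c W a"
proof -
  have "(\<Sum>u\<in>U. c u * a u) = (\<Sum>u\<in>W. c u * a u)"
    by (rule sum.mono_neutral_right[OF assms(1,2)]) (use assms(3) in auto)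
  moreover have "(\<Sum>u\<in>U. (c u * a u) *\<^sub>R u) = (\<Sum>u\<in>W. (c u * a u) *\<^sub>R u)"
    by (rule sum.mono_neutral_right[OF assms(1,2)]) (use assms(3) in auto)
  ultimately show ?thesis by (simp add: hv_def)
qed

lemma sum_restrict0:
  fixes U :: "'a::euclidean_space set" and a :: "'a \<Rightarrow> real"
  assumes "finite U" "W \<subseteq> U" "\<forall>u\<in>U - W. a u = 0"
  shows "sum a U = sum a W" "(\<Sum>u\<in>U. a u *\<^sub>R u) = (\<Sum>u\<in>W. a u *\<^sub>R u)"
proof -
  show "sum a U = sum a W"
    by (rule sum.mono_neutral_right[OF assms(1,2)]) (use assms(3) in simp)
  show "(\<Sum>u\<in>U. a u *\<^sub>R u) = (\<Sum>u\<in>W. a u *\<^sub>R u)"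
    by (rule sum.mono_neutral_right[OF assms(1,2)]) (use assms(3) in simp)
qed

lemma hv_consistent:
  fixes U1 :: "'a::euclidean_space set"
  assumes K: "simplicial_complex K" and h1: "convex hull U1 \<in> K" "finite U1" "\<not> affine_dependent U1"
    and h2: "convex hull U2 \<in> K" "finite U2" "\<not> affine_dependent U2"
    and r1: "rep U1 a1 z" and r2: "rep U2 a2 z"
  shows "hv c U1 a1 = hv c U2 a2"
proof -
  obtain W where W: "W \<subseteq> U1" "W \<subseteq> U2" "convex hull U1 \<inter> convex hull U2 = convex hull W"
    using common_face[OF K h1(1) h2(1) h1(3) h2(3)] by blast
  have zW: "z \<in> convex hull W" using W rep_in_hull r1 r2 h1 h2 by blast
  have z1: "\<forall>u\<in>U1 - W. a1 u = 0" using support_lemma[OF h1(2,3) W(1) r1 zW] by blast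
  have z2: "\<forall>u\<in>U2 - W. a2 u = 0" using support_lemma[OF h2(2,3) W(2) r2 zW] by blast
  have fW: "finite W" using W h1 finite_subset by blast
  have iW: "\<not> affine_dependent W" using W h1 affine_independent_subset by blast
  have e: "\<forall>u\<in>W. a1 u = a2 u"
  proof
    fix u assume "u \<in> W"
    show "a1 u = a2 u"
      apply (rule coord_unique[OF fW iW])
      using r1 r2 sum_restrict0[OF h1(2) W(1) z1] sum_restrict0[OF h2(2) W(2) z2] \<open>u\<in>W\<close>
      by (auto simp: rep_def)
  qed
  have "hv c U1 a1 = hv c W a1" using hv_restrict[OF h1(2) W(1) z1] .
  also have "\<dots> = hv c W a2" unfolding hv_def using e by (auto intro!: sum.cong arg_cong2[where f="(*\<^sub>R)"])
  also have "\<dots> = hv c U2 a2" using hv_restrict[OF h2(2) W(2) z2] by simp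
  finally show ?thesis .
qed

definition hmap :: "'a::euclidean_space set set \<Rightarrow> ('a \<Rightarrow> real) \<Rightarrow> 'a \<Rightarrow> 'a" where
  "hmap K c z = (if z \<in> \<Union>K then (SOME y. \<exists>U a. finite U \<and> \<not> affine_dependent U \<and> convex hull U \<in> K
        \<and> rep U a z \<and> y = hv c U a) else z)"

lemma hmap_eq:
  assumes K: "simplicial_complex K" and h: "convex hull U \<in> K" "finite U" "\<not> affine_dependent U"
    and r: "rep U a z"
  shows "hmap K c z = hv c U a"
proof -
  have zK: "z \<in> \<Union>K" using rep_in_hull[OF h(2) r] h(1) by blast
  let ?P = "\<lambda>y. \<exists>U a. finite U \<and> \<not> affine_dependent U \<and> convex hull U \<in> K \<and> rep U a z \<and> y = hv c U a"
  have "?P (hv c U a)" using h r by blast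
  hence "?P (SOME y. ?P y)" by (rule someI)
  then obtain U' a' where "finite U'" "\<not> affine_dependent U'" "convex hull U' \<in> K" "rep U' a' z"
    "(SOME y. ?P y) = hv c U' a'" by blast
  thus ?thesis using zK hv_consistent[OF K h(1,2,3) _ _ _ r, of U' a'] by (simp add: hmap_def)
qed

lemma point_rep:
  assumes K: "simplicial_complex K" and z: "z \<in> \<Union>K"
  shows "\<exists>U a. finite U \<and> \<not> affine_dependent U \<and> convex hull U \<in> K \<and> rep U a z"
proof -
  obtain \<sigma> where "\<sigma> \<in> K" "z \<in> \<sigma>" using z by blast
  then obtain U where "finite U" "\<not> affine_dependent U" "\<sigma> = convex hull U"
    using K unfolding simplicial_complex_def is_simplex_def by blast
  thus ?thesis using hull_rep \<open>\<sigma> \<in> K\<close> \<open>z \<in> \<sigma>\<close> by blast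
qed

lemma rep_pos:
  assumes "finite U" "rep U a z" "\<forall>u. c u > 0"
  shows "(\<Sum>u\<in>U. c u * a u) > 0"
proof -
  obtain u where u: "u \<in> U" "a u > 0"
  proof (rule ccontr)
    assume "\<not> thesis"
    hence "\<forall>u\<in>U. a u \<le> 0" using that by force
    hence "sum a U \<le> 0" by (simp add: sum_nonpos)
    thus False using assms(2) by (simp add: rep_def)
  qed
  have "c u * a u \<le> (\<Sum>u\<in>U. c u * a u)"
    apply (rule member_le_sum[OF u(1)]) using assms by (auto simp: rep_def less_imp_le)
  moreover have "c u * a u > 0" using u assms(3) by simp
  ultimately show ?thesis by linarith
qed

lemma hv_rep:
  assumes "finite U" "rep U a z" "\<forall>u. c u > 0"
  shows "rep U (\<lambda>u. c u * a u / (\<Sum>u\<in>U. c u * a u)) (hv c U a)"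
proof -
  let ?D = "(\<Sum>u\<in>U. c u * a u)"
  have D: "?D > 0" by (rule rep_pos[OF assms])
  have "sum (\<lambda>u. c u * a u / ?D) U = ?D / ?D" by (metis sum_divide_distrib)
  also have "\<dots> = 1" using D by simp
  finally show ?thesis using assms D
    by (auto simp: rep_def hv_def scaleR_sum_right divide_inverse mult.commute less_imp_le)
qed

lemma hmap_inverse:
  assumes K: "simplicial_complex K" and z: "z \<in> \<Union>K" and c: "\<forall>u. c u > 0"
  shows "hmap K (\<lambda>u. inverse (c u)) (hmap K c z) = z" "hmap K c z \<in> \<Union>K"
proof -
  obtain U a where U: "finite U" "\<not> affine_dependent U" "convex hull U \<in> K" "rep U a z"
    using point_rep[OF K z] by blast
  let ?D = "(\<Sum>u\<in>U. c u * a u)"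
  have D: "?D > 0" by (rule rep_pos[OF U(1,4) c])
  have e1: "hmap K c z = hv c U a" by (rule hmap_eq[OF K U(3,1,2,4)])
  have r2: "rep U (\<lambda>u. c u * a u / ?D) (hv c U a)" by (rule hv_rep[OF U(1,4) c])
  show "hmap K c z \<in> \<Union>K" using e1 rep_in_hull[OF U(1) r2] U(3) by (metis UnionI)
  have "hmap K (\<lambda>u. inverse (c u)) (hmap K c z) = hv (\<lambda>u. inverse (c u)) U (\<lambda>u. c u * a u / ?D)"
    unfolding e1 by (rule hmap_eq[OF K U(3,1,2) r2])
  also have "\<dots> = z"
  proof -
    have cne: "\<And>u. c u \<noteq> 0" using c by (metis less_irrefl)
    have "(\<Sum>u\<in>U. inverse (c u) * (c u * a u / ?D)) = (\<Sum>u\<in>U. a u / ?D)"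
      by (rule sum.cong) (simp_all add: cne)
    also have "\<dots> = (\<Sum>u\<in>U. a u) / ?D" by (metis sum_divide_distrib)
    finally have "(\<Sum>u\<in>U. inverse (c u) * (c u * a u / ?D)) = (\<Sum>u\<in>U. a u) / ?D" .
    moreover have "(\<Sum>u\<in>U. (inverse (c u) * (c u * a u / ?D)) *\<^sub>R u) = (\<Sum>u\<in>U. (a u / ?D) *\<^sub>R u)"
      by (rule sum.cong) (simp_all add: cne)
    moreover have "(\<Sum>u\<in>U. (a u / ?D) *\<^sub>R u) = inverse ?D *\<^sub>R (\<Sum>u\<in>U. a u *\<^sub>R u)"
      by (simp add: scaleR_sum_right divide_inverse mult.commute)
    moreover have D': "?D \<noteq> 0" using D by simp
    ultimately show ?thesis using U(4) by (simp add: hv_def rep_def)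
  qed
  finally show "hmap K (\<lambda>u. inverse (c u)) (hmap K c z) = z" .
qed

lemma hmap_cell:
  assumes K: "simplicial_complex K" and C: "C \<in> cells K" and z: "z \<in> C" and c: "\<forall>u. c u > 0"
  shows "hmap K c z \<in> C"
proof -
  obtain W where W: "finite W" "\<not> affine_dependent W" "W \<noteq> {}" "convex hull W \<in> K" "C = open_simplex W"
    using C unfolding cells_def by blast
  obtain l where l: "\<forall>v\<in>W. 0 < l v \<and> l v \<le> 1" "sum l W = 1" "z = (\<Sum>v\<in>W. l v *\<^sub>R v)"
    using z W(5) unfolding open_simplex_def by blast
  have r: "rep W l z" using l by (auto simp: rep_def less_imp_le)
  let ?D = "(\<Sum>u\<in>W. c u * l u)"
  have D: "?D > 0" by (rule rep_pos[OF W(1) r c])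
  have r2: "rep W (\<lambda>u. c u * l u / ?D) (hv c W l)" by (rule hv_rep[OF W(1) r c])
  have pos: "\<forall>v\<in>W. 0 < c v * l v / ?D" using l c D by simp
  have le1: "\<forall>v\<in>W. c v * l v / ?D \<le> 1"
  proof
    fix v assume v: "v \<in> W"
    have "c v * l v / ?D \<le> (\<Sum>u\<in>W. c u * l u / ?D)"
      by (rule member_le_sum[OF v]) (use pos W(1) in \<open>auto simp: less_imp_le\<close>)
    thus "c v * l v / ?D \<le> 1" using r2 by (simp add: rep_def)
  qed
  have "hmap K c z = hv c W l" by (rule hmap_eq[OF K W(4,1,2) r])
  show ?thesis unfolding W(5) open_simplex_def \<open>hmap K c z = hv c W l\<close>
    apply (rule CollectI)
    apply (rule exI[of _ "\<lambda>u. c u * l u / ?D"])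
    using r2 pos le1 by (auto simp: rep_def)
qed



lemma affine_ext:
  fixes U :: "'a::euclidean_space set" and F :: "'a \<Rightarrow> 'b::real_normed_vector"
  assumes "finite U" "\<not> affine_dependent U" "U \<noteq> {}"
  shows "\<exists>A. continuous_on UNIV A \<and> (\<forall>a. sum a U = 1 \<longrightarrow> A (\<Sum>u\<in>U. a u *\<^sub>R u) = (\<Sum>u\<in>U. a u *\<^sub>R F u))"
proof -
  obtain u0 where u0: "u0 \<in> U" using assms(3) by blast
  define S where "S = U - {u0}"
  have US: "U = insert u0 S" "u0 \<notin> S" using u0 by (auto simp: S_def)
  have ind: "independent ((\<lambda>x. -u0 + x) ` S)"
    using assms(2) affine_dependent_iff_dependent[OF US(2)] US(1) by simp
  obtain L where L: "linear L" "\<forall>x\<in>(\<lambda>x. -u0 + x) ` S. L x = F (x + u0) - F u0"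
    using linear_independent_extend[OF ind, of "\<lambda>x. F (x + u0) - F u0"] by blast
  have Lu: "L (u - u0) = F u - F u0" if "u \<in> U" for u
  proof (cases "u = u0")
    case True thus ?thesis using linear_0[OF L(1)] by simp
  next
    case False
    hence "-u0 + u \<in> (\<lambda>x. -u0 + x) ` S" using that by (auto simp: S_def)
    thus ?thesis using L(2) by (auto simp: algebra_simps)
  qed
  define A where "A z = F u0 + L (z - u0)" for z
  have cL: "continuous_on UNIV L"
    by (rule linear_continuous_on) (use L(1) linear_conv_bounded_linear in auto)
  have "continuous_on UNIV (\<lambda>z. L (z - u0))"
    by (rule continuous_on_compose2[OF cL]) (auto intro: continuous_intros)
  hence "continuous_on UNIV A" unfolding A_def by (intro continuous_intros)
  moreover have "A (\<Sum>u\<in>U. a u *\<^sub>R u) = (\<Sum>u\<in>U. a u *\<^sub>R F u)" if a: "sum a U = 1" for a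
  proof -
    have "(\<Sum>u\<in>U. a u *\<^sub>R u) - u0 = (\<Sum>u\<in>U. a u *\<^sub>R (u - u0))"
      using a by (simp add: scaleR_diff_right sum_subtractf flip: scaleR_sum_left)
    hence "L ((\<Sum>u\<in>U. a u *\<^sub>R u) - u0) = (\<Sum>u\<in>U. a u *\<^sub>R (F u - F u0))"
      using Lu by (simp add: linear_sum[OF L(1)] linear_scale[OF L(1)])
    also have "\<dots> = (\<Sum>u\<in>U. a u *\<^sub>R F u) - F u0"
      using a by (simp add: scaleR_diff_right sum_subtractf flip: scaleR_sum_left)
    finally show ?thesis by (simp add: A_def)
  qed
  ultimately show ?thesis by blast
qed

lemma hmap_cont:
  assumes K: "simplicial_complex K" and c: "\<forall>u. c u > 0"
  shows "continuous_on (\<Union>K) (hmap K c)"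
proof -
  have "continuous_on (\<Union>\<sigma>\<in>K. \<sigma>) (hmap K c)"
  proof (rule continuous_on_closed_Union)
    show "finite K" using K by (simp add: simplicial_complex_def)
  next
    fix \<sigma> assume s: "\<sigma> \<in> K"
    then obtain U where U: "finite U" "\<not> affine_dependent U" "\<sigma> = convex hull U"
      using K unfolding simplicial_complex_def is_simplex_def by blast
    show "closed \<sigma>" using U by (simp add: compact_imp_closed finite_imp_compact_convex_hull)
    show "continuous_on \<sigma> (hmap K c)"
    proof (cases "U = {}")
      case True thus ?thesis using U by simp
    next
      case False
      obtain N where N: "continuous_on UNIV N"
        "\<forall>a. sum a U = 1 \<longrightarrow> N (\<Sum>u\<in>U. a u *\<^sub>R u) = (\<Sum>u\<in>U. a u *\<^sub>R (c u *\<^sub>R u))"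
        using affine_ext[OF U(1,2) False, of "\<lambda>u. c u *\<^sub>R u"] by blast
      obtain D where D: "continuous_on UNIV D"
        "\<forall>a. sum a U = 1 \<longrightarrow> D (\<Sum>u\<in>U. a u *\<^sub>R u) = (\<Sum>u\<in>U. a u *\<^sub>R c u)"
        using affine_ext[OF U(1,2) False, of "c"] by blast
      have eq: "hmap K c z = inverse (D z) *\<^sub>R N z \<and> D z \<noteq> 0" if z: "z \<in> \<sigma>" for z
      proof -
        obtain a where a: "rep U a z" using hull_rep[OF U(1)] z U(3) by blast
        have "hmap K c z = hv c U a" using hmap_eq[OF K _ U(1,2) a] s U(3) by simp
        moreover have "D z = (\<Sum>u\<in>U. c u * a u)" using D(2) a by (simp add: rep_def mult.commute)
        moreover have "N z = (\<Sum>u\<in>U. (c u * a u) *\<^sub>R u)" using N(2) a by (simp add: rep_def mult.commute)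
        moreover have "(\<Sum>u\<in>U. c u * a u) > 0" by (rule rep_pos[OF U(1) a c])
        ultimately show ?thesis by (simp add: hv_def)
      qed
      have "continuous_on \<sigma> (\<lambda>z. inverse (D z) *\<^sub>R N z)"
        apply (intro continuous_intros continuous_on_subset[OF N(1)] continuous_on_subset[OF D(1)])
        using eq by auto
      thus ?thesis using eq continuous_on_eq by (metis (no_types, lifting))
    qed
  qed
  thus ?thesis by simp
qed



lemma sem_sub: "sem K Val \<phi> \<subseteq> \<Union>K"
  by (induction \<phi>) (use interior_of_subset_topspace[of "top_of_set (\<Union>K)"] in auto)

lemma invariance:
  fixes h g :: "'a::euclidean_space \<Rightarrow> 'a"
  assumes hc: "continuous_on (\<Union>K) h" and gc: "continuous_on (\<Union>K) g"
    and hP: "\<forall>z\<in>\<Union>K. h z \<in> \<Union>K" and gP: "\<forall>z\<in>\<Union>K. g z \<in> \<Union>K"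
    and gh: "\<forall>z\<in>\<Union>K. g (h z) = z" and hg: "\<forall>z\<in>\<Union>K. h (g z) = z"
    and hV: "\<forall>p. \<forall>z\<in>\<Union>K. h z \<in> Val p \<longleftrightarrow> z \<in> Val p"
  shows "\<forall>z\<in>\<Union>K. h z \<in> sem K Val \<phi> \<longleftrightarrow> z \<in> sem K Val \<phi>"
proof (induction \<phi>)
  case Top thus ?case using hP by simp
next
  case (Atom p) thus ?case using hP hV by simp
next
  case (Neg \<phi>) thus ?case using hP by simp
next
  case (Conj \<phi> \<psi>) thus ?case by simp
next
  case (Box \<phi>)
  show ?case
  proof
    fix z assume z: "z \<in> \<Union>K"
    show "h z \<in> sem K Val (Box \<phi>) \<longleftrightarrow> z \<in> sem K Val (Box \<phi>)"
    proof
      assume "h z \<in> sem K Val (Box \<phi>)"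
      then obtain T where T: "openin (top_of_set (\<Union>K)) T" "h z \<in> T" "T \<subseteq> sem K Val \<phi>"
        by (auto simp: interior_of_def)
      have o: "openin (top_of_set (\<Union>K)) (\<Union>K \<inter> h -` T)"
        by (rule continuous_openin_preimage[OF hc]) (use hP T in auto)
      have "\<Union>K \<inter> h -` T \<subseteq> sem K Val \<phi>" using Box.IH T(3) by blast
      thus "z \<in> sem K Val (Box \<phi>)" using o z T(2) by (auto simp: interior_of_def)
    next
      assume "z \<in> sem K Val (Box \<phi>)"
      then obtain T where T: "openin (top_of_set (\<Union>K)) T" "z \<in> T" "T \<subseteq> sem K Val \<phi>"
        by (auto simp: interior_of_def)
      have o: "openin (top_of_set (\<Union>K)) (\<Union>K \<inter> g -` T)"
        by (rule continuous_openin_preimage[OF gc]) (use gP T in auto)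
      have "\<Union>K \<inter> g -` T \<subseteq> sem K Val \<phi>"
      proof
        fix y assume y: "y \<in> \<Union>K \<inter> g -` T"
        hence "g y \<in> sem K Val \<phi>" "g y \<in> \<Union>K" using T(3) gP by auto
        have "h (g y) \<in> sem K Val \<phi> \<longleftrightarrow> g y \<in> sem K Val \<phi>" using Box.IH \<open>g y \<in> \<Union>K\<close> by blast
        moreover have "h (g y) = y" using hg y by blast
        ultimately show "y \<in> sem K Val \<phi>" using \<open>g y \<in> sem K Val \<phi>\<close> by simp
      qed
      moreover have "h z \<in> \<Union>K \<inter> g -` T" using z hP gh T(2) by auto
      ultimately show "h z \<in> sem K Val (Box \<phi>)" using o by (auto simp: interior_of_def)
    qed
  qed
next
  case (Gamma \<phi> \<psi>)
  have pm: "path (f \<circ> \<pi>) \<and> path_image (f \<circ> \<pi>) \<subseteq> \<Union>K"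
    if "path \<pi>" "path_image \<pi> \<subseteq> \<Union>K" "continuous_on (\<Union>K) f" "\<forall>z\<in>\<Union>K. f z \<in> \<Union>K"
    for \<pi> :: "real \<Rightarrow> 'a" and f
  proof
    show "path (f \<circ> \<pi>)" unfolding path_def
      using that by (intro continuous_on_compose) (auto simp: path_def path_image_def intro: continuous_on_subset)
    show "path_image (f \<circ> \<pi>) \<subseteq> \<Union>K" using that by (auto simp: path_image_def)
  qed
  have inK: "\<pi> s \<in> \<Union>K" if "path_image \<pi> \<subseteq> \<Union>K" "s \<in> {0<..<1}" for \<pi> :: "real \<Rightarrow> 'a" and s
  proof -
    have "s \<in> {0..1}" using that(2) by auto
    thus ?thesis using that(1) unfolding path_image_def by blast
  qed
  have inK1: "\<pi> 1 \<in> \<Union>K" if "path_image \<pi> \<subseteq> \<Union>K" for \<pi> :: "real \<Rightarrow> 'a"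
  proof -
    have "(1::real) \<in> {0..1}" by simp
    thus ?thesis using that unfolding path_image_def by blast
  qed
  show ?case
  proof
    fix z assume z: "z \<in> \<Union>K"
    show "h z \<in> sem K Val (Gamma \<phi> \<psi>) \<longleftrightarrow> z \<in> sem K Val (Gamma \<phi> \<psi>)"
    proof
      assume "h z \<in> sem K Val (Gamma \<phi> \<psi>)"
      then obtain \<pi> where p: "path \<pi>" "path_image \<pi> \<subseteq> \<Union>K" "\<pi> 0 = h z"
        "\<forall>s\<in>{0<..<1}. \<pi> s \<in> sem K Val \<phi>" "\<pi> 1 \<in> sem K Val \<psi>" by auto
      have a: "path (g \<circ> \<pi>) \<and> path_image (g \<circ> \<pi>) \<subseteq> \<Union>K" using pm[OF p(1,2) gc gP] .
      have b: "\<forall>s\<in>{0<..<1}. (g \<circ> \<pi>) s \<in> sem K Val \<phi>"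
      proof
        fix s :: real assume s: "s \<in> {0<..<1}"
        have ps: "\<pi> s \<in> \<Union>K" by (rule inK[OF p(2) s])
        hence "g (\<pi> s) \<in> \<Union>K" using gP by blast
        hence "h (g (\<pi> s)) \<in> sem K Val \<phi> \<longleftrightarrow> g (\<pi> s) \<in> sem K Val \<phi>" using Gamma.IH(1) by blast
        moreover have "h (g (\<pi> s)) = \<pi> s" using hg ps by blast
        ultimately show "(g \<circ> \<pi>) s \<in> sem K Val \<phi>" using p(4) s by simp
      qed
      have p1: "\<pi> 1 \<in> \<Union>K" using inK1[OF p(2)] .
      hence "g (\<pi> 1) \<in> \<Union>K" using gP by blast
      hence "h (g (\<pi> 1)) \<in> sem K Val \<psi> \<longleftrightarrow> g (\<pi> 1) \<in> sem K Val \<psi>" using Gamma.IH(2) by blast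
      moreover have "h (g (\<pi> 1)) = \<pi> 1" using hg p1 by blast
      ultimately have c: "(g \<circ> \<pi>) 1 \<in> sem K Val \<psi>" using p(5) by simp
      show "z \<in> sem K Val (Gamma \<phi> \<psi>)"
        using a b c z gh p(3) by (auto intro!: exI[of _ "g \<circ> \<pi>"])
    next
      assume "z \<in> sem K Val (Gamma \<phi> \<psi>)"
      then obtain \<pi> where p: "path \<pi>" "path_image \<pi> \<subseteq> \<Union>K" "\<pi> 0 = z"
        "\<forall>s\<in>{0<..<1}. \<pi> s \<in> sem K Val \<phi>" "\<pi> 1 \<in> sem K Val \<psi>" by auto
      have a: "path (h \<circ> \<pi>) \<and> path_image (h \<circ> \<pi>) \<subseteq> \<Union>K" using pm[OF p(1,2) hc hP] .
      have b: "\<forall>s\<in>{0<..<1}. (h \<circ> \<pi>) s \<in> sem K Val \<phi>"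
      proof
        fix s :: real assume s: "s \<in> {0<..<1}"
        have ps: "\<pi> s \<in> \<Union>K" by (rule inK[OF p(2) s])
        have "\<pi> s \<in> sem K Val \<phi>" using p(4) s by blast
        moreover have "h (\<pi> s) \<in> sem K Val \<phi> \<longleftrightarrow> \<pi> s \<in> sem K Val \<phi>" using Gamma.IH(1) ps by blast
        ultimately show "(h \<circ> \<pi>) s \<in> sem K Val \<phi>" by simp
      qed
      have p1: "\<pi> 1 \<in> \<Union>K" using inK1[OF p(2)] .
      have "h (\<pi> 1) \<in> sem K Val \<psi> \<longleftrightarrow> \<pi> 1 \<in> sem K Val \<psi>" using Gamma.IH(2) p1 by blast
      hence c: "(h \<circ> \<pi>) 1 \<in> sem K Val \<psi>" using p(5) by simp
      show "h z \<in> sem K Val (Gamma \<phi> \<psi>)"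
        using a b c z hP p(3) by (auto intro!: exI[of _ "h \<circ> \<pi>"])
    qed
  qed
qed

lemma open_simplex_rep:
  assumes "z \<in> open_simplex W" shows "\<exists>l. rep W l z \<and> (\<forall>v\<in>W. 0 < l v)"
proof -
  obtain l where l: "\<forall>v\<in>W. 0 < l v \<and> l v \<le> 1" "sum l W = 1" "z = (\<Sum>v\<in>W. l v *\<^sub>R v)"
    using assms unfolding open_simplex_def by blast
  hence "rep W l z \<and> (\<forall>v\<in>W. 0 < l v)" unfolding rep_def by (auto simp: less_imp_le)
  thus ?thesis by blast
qed

lemma cell_sub:
  assumes "C \<in> cells K" shows "C \<subseteq> \<Union>K"
proof
  fix z assume z: "z \<in> C"
  obtain W where W: "finite W" "convex hull W \<in> K" "C = open_simplex W"
    using assms unfolding cells_def by blast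
  obtain l where "rep W l z" using open_simplex_rep z W(3) by blast
  thus "z \<in> \<Union>K" using rep_in_hull[OF W(1)] W(2) by blast
qed

lemma same_cell_equiv:
  assumes PM: "polyhedral_model K Val" and C: "C \<in> cells K" and x: "x \<in> C" and y: "y \<in> C"
  shows "x \<in> sem K Val \<phi> \<longleftrightarrow> y \<in> sem K Val \<phi>"
proof -
  have K: "simplicial_complex K" using PM by (simp add: polyhedral_model_def)
  obtain W where W: "finite W" "\<not> affine_dependent W" "W \<noteq> {}" "convex hull W \<in> K" "C = open_simplex W"
    using C unfolding cells_def by blast
  obtain lx where lx: "rep W lx x" "\<forall>v\<in>W. 0 < lx v" using open_simplex_rep x W(5) by blast
  obtain ly where ly: "rep W ly y" "\<forall>v\<in>W. 0 < ly v" using open_simplex_rep y W(5) by blast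
  define c where "c v = (if v \<in> W then ly v / lx v else 1)" for v
  have c: "\<forall>u. c u > 0" using lx(2) ly(2) by (simp add: c_def)
  have c': "\<forall>u. inverse (c u) > 0" using c by simp
  have cl: "c v * lx v = ly v" if "v \<in> W" for v
  proof -
    have "lx v > 0" using that lx(2) by blast
    thus ?thesis using that by (simp add: c_def)
  qed
  have "hmap K c x = hv c W lx" by (rule hmap_eq[OF K W(4,1,2) lx(1)])
  also have "\<dots> = y"
  proof -
    have "(\<Sum>u\<in>W. c u * lx u) = 1" using cl ly(1) by (simp add: rep_def)
    moreover have "(\<Sum>u\<in>W. (c u * lx u) *\<^sub>R u) = y" using cl ly(1) by (simp add: rep_def)
    ultimately show ?thesis by (simp add: hv_def)
  qed
  finally have hx: "hmap K c x = y" .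
  let ?h = "hmap K c" and ?g = "hmap K (\<lambda>u. inverse (c u))"
  have gh: "\<forall>z\<in>\<Union>K. ?g (?h z) = z" using hmap_inverse(1)[OF K _ c] by blast
  have hg: "\<forall>z\<in>\<Union>K. ?h (?g z) = z" using hmap_inverse(1)[OF K _ c'] by simp
  have hP: "\<forall>z\<in>\<Union>K. ?h z \<in> \<Union>K" using hmap_inverse(2)[OF K _ c] by blast
  have gP: "\<forall>z\<in>\<Union>K. ?g z \<in> \<Union>K" using hmap_inverse(2)[OF K _ c'] by blast
  have hV: "\<forall>p. \<forall>z\<in>\<Union>K. ?h z \<in> Val p \<longleftrightarrow> z \<in> Val p"
  proof (intro allI ballI)
    fix p z assume z: "z \<in> \<Union>K"
    obtain S where S: "S \<subseteq> cells K" "Val p = \<Union>S" using PM unfolding polyhedral_model_def by blast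
    have "?h z \<in> D \<longleftrightarrow> z \<in> D" if "D \<in> cells K" for D
      using hmap_cell[OF K that _ c, of z] hmap_cell[OF K that _ c', of "?h z"] gh z by auto
    thus "?h z \<in> Val p \<longleftrightarrow> z \<in> Val p" using S by blast
  qed
  have "\<forall>z\<in>\<Union>K. ?h z \<in> sem K Val \<phi> \<longleftrightarrow> z \<in> sem K Val \<phi>"
    by (rule invariance[OF hmap_cont[OF K c] hmap_cont[OF K c'] hP gP gh hg hV])
  moreover have "x \<in> \<Union>K" using cell_sub[OF C] x by blast
  ultimately show ?thesis using hx by metis
qed

lemma point_cell:
  assumes K: "simplicial_complex K" and z: "z \<in> \<Union>K"
  shows "\<exists>C\<in>cells K. z \<in> C"
proof -
  obtain U a where U: "finite U" "\<not> affine_dependent U" "convex hull U \<in> K" "rep U a z"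
    using point_rep[OF K z] by blast
  define S where "S = {u\<in>U. a u > 0}"
  have SU: "S \<subseteq> U" by (auto simp: S_def)
  have z0: "\<forall>u\<in>U - S. a u = 0" using U(4) by (force simp: S_def rep_def)
  have fS: "finite S" using U(1) SU finite_subset by blast
  have s1: "sum a S = 1" "z = (\<Sum>u\<in>S. a u *\<^sub>R u)"
    using sum_restrict0[OF U(1) SU z0] U(4) by (auto simp: rep_def)
  have Sne: "S \<noteq> {}" using s1 by auto
  have "simplex_face (convex hull S) (convex hull U)"
    unfolding simplex_face_def using U(1,2) SU by blast
  hence SK: "convex hull S \<in> K" using K U(3) unfolding simplicial_complex_def by blast
  have "z \<in> open_simplex S"
    unfolding open_simplex_def
  proof (intro CollectI exI[of _ a] conjI ballI)
    fix v assume v: "v \<in> S"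
    show "0 < a v" using v by (simp add: S_def)
    show "a v \<le> 1" using member_le_sum[OF v, of a] s1(1) fS by (auto simp: S_def less_imp_le)
  qed (use s1 in auto)
  thus ?thesis using fS affine_independent_subset[OF U(2) SU] Sne SK unfolding cells_def by blast
qed

lemma cells_finite:
  assumes K: "simplicial_complex K" shows "finite (cells K)"
proof -
  have "cells K \<subseteq> (\<lambda>\<sigma>. open_simplex {x. x extreme_point_of \<sigma>}) ` K"
  proof
    fix C assume "C \<in> cells K"
    then obtain V where V: "\<not> affine_dependent V" "convex hull V \<in> K" "C = open_simplex V"
      unfolding cells_def by blast
    have "{x. x extreme_point_of (convex hull V)} = V"
      using extreme_point_of_convex_hull_affine_independent[OF V(1)] by blast
    thus "C \<in> (\<lambda>\<sigma>. open_simplex {x. x extreme_point_of \<sigma>}) ` K"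
      using V by (intro image_eqI[of _ _ "convex hull V"]) auto
  qed
  moreover have "finite K" using K by (simp add: simplicial_complex_def)
  ultimately show ?thesis using finite_subset by blast
qed

lemma conj_exists:
  assumes "finite F" shows "\<exists>\<phi>. sem K Val \<phi> = \<Union>K \<inter> \<Inter>(sem K Val ` F)"
  using assms
proof (induction F rule: finite_induct)
  case empty show ?case by (rule exI[of _ Top]) simp
next
  case (insert \<psi> F)
  then obtain \<phi> where "sem K Val \<phi> = \<Union>K \<inter> \<Inter>(sem K Val ` F)" by blast
  thus ?case using sem_sub[of K Val \<psi>] by (intro exI[of _ "Conj \<psi> \<phi>"]) auto
qed



theorem mainTheorem3:
  fixes K :: "'a::euclidean_space set set" and Val :: "'p::finite \<Rightarrow> 'a set"
  assumes "polyhedral_model K Val"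
  shows "finite ((\<Union>K) // log_equiv K Val)
    \<and> (\<forall>C \<in> (\<Union>K) // log_equiv K Val. \<exists>\<phi>. \<forall>x \<in> \<Union>K. sat K Val x \<phi> \<longleftrightarrow> x \<in> C)"
proof -
  let ?P = "\<Union>K" and ?R = "log_equiv K Val"
  have K: "simplicial_complex K" using assms by (simp add: polyhedral_model_def)
  have Rdef: "(x, y) \<in> ?R \<longleftrightarrow> x \<in> ?P \<and> y \<in> ?P \<and> (\<forall>\<phi>. x \<in> sem K Val \<phi> \<longleftrightarrow> y \<in> sem K Val \<phi>)" for x y
    by (simp add: log_equiv_def sat_def)
  have cls: "?R `` {x} = ?R `` {y}" if "(x, y) \<in> ?R" for x y
    using that unfolding Rdef Image_def by auto
  have "?P // ?R \<subseteq> (\<lambda>C. ?R `` {SOME y. y \<in> C}) ` cells K"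
  proof
    fix D assume "D \<in> ?P // ?R"
    then obtain x where x: "x \<in> ?P" "D = ?R `` {x}" unfolding quotient_def by blast
    obtain C where C: "C \<in> cells K" "x \<in> C" using point_cell[OF K x(1)] by blast
    have yC: "(SOME y. y \<in> C) \<in> C" using C(2) by (rule someI)
    have "(x, SOME y. y \<in> C) \<in> ?R"
      unfolding Rdef using x(1) cell_sub[OF C(1)] yC same_cell_equiv[OF assms C(1) C(2) yC] by blast
    hence "D = ?R `` {SOME y. y \<in> C}" using cls x(2) by blast
    thus "D \<in> (\<lambda>C. ?R `` {SOME y. y \<in> C}) ` cells K" using C(1) by blast
  qed
  hence fin: "finite (?P // ?R)" using cells_finite[OF K] finite_surj by blast
  have char: "\<exists>\<phi>. \<forall>z \<in> ?P. sat K Val z \<phi> \<longleftrightarrow> z \<in> C" if C: "C \<in> ?P // ?R" for C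
  proof -
    obtain x where x: "x \<in> ?P" "C = ?R `` {x}" using C unfolding quotient_def by blast
    have "\<exists>\<psi>. x \<in> sem K Val \<psi> \<and> (\<forall>w\<in>D. w \<notin> sem K Val \<psi>)" if D: "D \<in> ?P // ?R - {C}" for D
    proof -
      obtain y where y: "y \<in> ?P" "D = ?R `` {y}" using D unfolding quotient_def by blast
      have "(x, y) \<notin> ?R" using cls x(2) y(2) D by blast
      then obtain \<phi> where \<phi>: "\<not> (x \<in> sem K Val \<phi> \<longleftrightarrow> y \<in> sem K Val \<phi>)" using x(1) y(1) Rdef by blast
      have wD: "w \<in> sem K Val ch \<longleftrightarrow> y \<in> sem K Val ch" if "w \<in> D" for w ch
        using that y(2) Rdef by auto
      show ?thesis
      proof (cases "x \<in> sem K Val \<phi>")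
        case True thus ?thesis using \<phi> wD by blast
      next
        case False
        thus ?thesis using \<phi> wD x(1) y(1)
          by (intro exI[of _ "Neg \<phi>"]) auto
      qed
    qed
    then obtain \<Psi> where \<Psi>: "\<forall>D\<in>?P // ?R - {C}. x \<in> sem K Val (\<Psi> D) \<and> (\<forall>w\<in>D. w \<notin> sem K Val (\<Psi> D))"
      by metis
    obtain \<phi> where \<phi>: "sem K Val \<phi> = ?P \<inter> \<Inter>(sem K Val ` (\<Psi> ` (?P // ?R - {C})))"
      using conj_exists[of "\<Psi> ` (?P // ?R - {C})" K Val] fin by blast
    show ?thesis
    proof (intro exI[of _ \<phi>] ballI)
      fix z assume z: "z \<in> ?P"
      show "sat K Val z \<phi> \<longleftrightarrow> z \<in> C"
      proof
        assume "sat K Val z \<phi>"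
        hence zs: "\<forall>D\<in>?P // ?R - {C}. z \<in> sem K Val (\<Psi> D)" using \<phi> by (auto simp: sat_def)
        show "z \<in> C"
        proof (rule ccontr)
          assume nz: "z \<notin> C"
          let ?D = "?R `` {z}"
          have "?D \<in> ?P // ?R" using z unfolding quotient_def by blast
          moreover have "z \<in> ?D" using z Rdef by auto
          ultimately have "?D \<in> ?P // ?R - {C}" using nz by blast
          thus False using zs \<Psi> \<open>z \<in> ?D\<close> by blast
        qed
      next
        assume "z \<in> C"
        hence xz: "(x, z) \<in> ?R" using x(2) by blast
        have "\<forall>D\<in>?P // ?R - {C}. z \<in> sem K Val (\<Psi> D)" using \<Psi> xz Rdef by blast
        thus "sat K Val z \<phi>" using \<phi> z by (auto simp: sat_def)
      qed
    qed
  qed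
  show ?thesis using fin char by blast
qed

end
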